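(* The formal power series $f$ and $g$ satisfy $$f(x;u,v,w)=\frac{x-2x^2-wx^3}{1-x}+xg(x;uv,w)+xf(x;1,v,w)+\Big(wx^2+\frac{uvwx}{1-uv}\Big)f(x;1,uv,w)-\frac{u^2v^2wx}{1-uv}f(x;1,1,uvw)$$ and $$(1-x)g(x;v,w)=\frac{x-x^2-wx^3}{1-x}+\Big(wx^2+\frac{vwx}{1-v}\Big)f(x;1,v,w)-\frac{v^2wx}{1-v}f(x;1,1,vw).$$
   Context: An ascent sequence of length $n$ is a sequence $x_1\cdots x_n$ of non-negative integers with $x_1=0$ and $x_i\le \mathrm{asc}(x_1\cdots x_{i-1})+1$ for $1<i\le n$, where $\mathrm{asc}$ counts ascents (indices $j$ with $x_j<x_{j+1}$). It avoids $021$ if there are no $i<j<k$ with $x_i<x_k<x_j$. For $n\ge1$, $0\le s\le r\le m<n$, let $a_{n,m,r,s}$ be the number of $021$-avoiding ascent sequences of length $n$ with exactly $m$ ascents, largest letter $r$ and last letter $s$. Let $A_{n,m}(u,v)=\sum_{r=0}^m\sum_{s=0}^r a_{n,m,r,s}u^sv^r$ and $B_{n,m}(v)=\sum_{r=0}^m a_{n,m,r,r}v^r$; $A_n(u,v,w)=\sum_{m=0}^{n-1}A_{n,m}(u,v)w^m$, $B_n(v,w)=\sum_{m=0}^{n-1}B_{n,m}(v)w^m$; and $f(x;u,v,w)=\sum_{n\ge1}A_n(u,v,w)x^n$, $g(x;v,w)=\sum_{n\ge1}B_n(v,w)x^n$. Thus in $f$, $x$ marks length, $u$ the last letter, $v$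 the largest letter, $w$ the number of ascents. *)

theory Defs
  imports "HOL-Computational_Algebra.Formal_Power_Series"
begin

text \<open>Ascent sequences are lists of naturals; positions are 0-based.\<close>

definition asc :: "nat list \<Rightarrow> nat" where
  "asc xs = card {j. Suc j < length xs \<and> xs ! j < xs ! Suc j}"

definition is_ascent_seq :: "nat list \<Rightarrow> bool" where
  "is_ascent_seq xs \<longleftrightarrow> xs \<noteq> [] \<and> xs ! 0 = 0 \<and>
     (\<forall>i. 0 < i \<and> i < length xs \<longrightarrow> xs ! i \<le> asc (take i xs) + 1)"

definition avoids021 :: "nat list \<Rightarrow> bool" where
  "avoids021 xs \<longleftrightarrow> \<not> (\<exists>i j k. i < j \<and> j < k \<and> k < length xs \<and>
       xs ! i < xs ! k \<and> xs ! k < xs ! j)"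

definition a_cnt :: "nat \<Rightarrow> nat \<Rightarrow> nat \<Rightarrow> nat \<Rightarrow> nat" where
  "a_cnt n m r s = card {xs. length xs = n \<and> is_ascent_seq xs \<and> avoids021 xs \<and>
       asc xs = m \<and> Max (set xs) = r \<and> last xs = s}"

definition A_poly :: "nat \<Rightarrow> real \<Rightarrow> real \<Rightarrow> real \<Rightarrow> real" where
  "A_poly n u v w = (\<Sum>m<n. (\<Sum>r\<le>m. \<Sum>s\<le>r. real (a_cnt n m r s) * u ^ s * v ^ r) * w ^ m)"

definition B_poly :: "nat \<Rightarrow> real \<Rightarrow> real \<Rightarrow> real" where
  "B_poly n v w = (\<Sum>m<n. (\<Sum>r\<le>m. real (a_cnt n m r r) * v ^ r) * w ^ m)"

text \<open>f(x;u,v,w) and g(x;v,w) as formal power series in x, with the variables u,v,w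
  specialised to real numbers (sum over n \<ge> 1).\<close>
definition f_gf :: "real \<Rightarrow> real \<Rightarrow> real \<Rightarrow> real fps" where
  "f_gf u v w = Abs_fps (\<lambda>n. if n = 0 then 0 else A_poly n u v w)"

definition g_gf :: "real \<Rightarrow> real \<Rightarrow> real fps" where
  "g_gf v w = Abs_fps (\<lambda>n. if n = 0 then 0 else B_poly n v w)"

end

theory Submission
  imports Defs
begin


definition SS :: "nat \<Rightarrow> nat list set" where
  "SS n = {xs. length xs = n \<and> is_ascent_seq xs \<and> avoids021 xs}"

definition allowed :: "nat list \<Rightarrow> nat set" where
  "allowed xs = {a. a = 0 \<or> (Max (set xs) \<le> a \<and> a \<le> asc xs + 1)}"

lemma asc_snoc:
  assumes "xs \<noteq> []"
  shows "asc (xs @ [a]) = asc xs + (if last xs < a then 1 else 0)"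
proof -
  let ?A = "{j. Suc j < length xs \<and> xs ! j < xs ! Suc j}"
  let ?B = "{j. j = length xs - 1 \<and> last xs < a}"
  have eq: "{j. Suc j < length (xs@[a]) \<and> (xs@[a]) ! j < (xs@[a]) ! Suc j} = ?A \<union> ?B"
  proof (rule set_eqI)
    fix j
    show "j \<in> {j. Suc j < length (xs@[a]) \<and> (xs@[a]) ! j < (xs@[a]) ! Suc j} \<longleftrightarrow> j \<in> ?A \<union> ?B"
    proof (cases "Suc j < length xs")
      case True
      then show ?thesis by (auto simp: nth_append)
    next
      case False
      show ?thesis
      proof (cases "Suc j = length xs")
        case True
        then have "j = length xs - 1" by simp
        then show ?thesis using assms True by (auto simp: nth_append last_conv_nth)
      next
        case False
        then have "length xs \<le> j" using \<open>\<not> Suc j < length xs\<close> by simp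
        moreover have "0 < length xs" using assms by simp
        ultimately have "j \<noteq> length xs - 1" by arith
        then show ?thesis using \<open>length xs \<le> j\<close> by auto
      qed
    qed
  qed
  have fA: "finite ?A" by (rule finite_subset[of _ "{..<length xs}"]) auto
  have fB: "finite ?B" by (rule finite_subset[of _ "{length xs - 1}"]) auto
  have d: "?A \<inter> ?B = {}" by auto
  have "card ?B = (if last xs < a then 1 else 0)" by auto
  then show ?thesis unfolding asc_def eq using card_Un_disjoint[OF fA fB d] by simp
qed

lemma asc_le: "asc xs \<le> length xs - 1"
proof -
  have "{j. Suc j < length xs \<and> xs ! j < xs ! Suc j} \<subseteq> {..<length xs - 1}" by auto
  from card_mono[OF _ this] show ?thesis unfolding asc_def by simp
qed

lemma ascent_snoc:
  assumes "xs \<noteq> []"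
  shows "is_ascent_seq (xs @ [a]) \<longleftrightarrow> is_ascent_seq xs \<and> a \<le> asc xs + 1"
proof -
  have t: "\<And>i. i \<le> length xs \<Longrightarrow> take i (xs @ [a]) = take i xs" by simp
  have n0: "(xs @ [a]) ! 0 = xs ! 0" using assms by (simp add: nth_append)
  show ?thesis
  proof
    assume h: "is_ascent_seq (xs @ [a])"
    have "a \<le> asc xs + 1"
    proof -
      have "0 < length xs" using assms by simp
      have HH: "\<forall>i. 0 < i \<and> i < length (xs@[a]) \<longrightarrow> (xs@[a])!i \<le> asc (take i (xs@[a])) + 1"
        using h unfolding is_ascent_seq_def by blast
      have "(xs@[a]) ! length xs \<le> asc (take (length xs) (xs@[a])) + 1"
        by (rule HH[rule_format]) (use \<open>0 < length xs\<close> in simp)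
      then show ?thesis by simp
    qed
    moreover have "is_ascent_seq xs"
      unfolding is_ascent_seq_def
    proof (intro conjI allI impI)
      show "xs \<noteq> []" by (rule assms)
      show "xs ! 0 = 0" using h n0 unfolding is_ascent_seq_def by simp
      fix i assume i: "0 < i \<and> i < length xs"
      then have "(xs@[a]) ! i \<le> asc (take i (xs@[a])) + 1" using h unfolding is_ascent_seq_def by simp
      then show "xs ! i \<le> asc (take i xs) + 1" using i by (simp add: nth_append)
    qed
    ultimately show "is_ascent_seq xs \<and> a \<le> asc xs + 1" by simp
  next
    assume h: "is_ascent_seq xs \<and> a \<le> asc xs + 1"
    show "is_ascent_seq (xs @ [a])"
      unfolding is_ascent_seq_def
    proof (intro conjI allI impI)
      show "xs @ [a] \<noteq> []" by simp
      show "(xs@[a]) ! 0 = 0" using h n0 unfolding is_ascent_seq_def by simp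
      fix i assume i: "0 < i \<and> i < length (xs @ [a])"
      show "(xs@[a]) ! i \<le> asc (take i (xs@[a])) + 1"
      proof (cases "i < length xs")
        case True
        then show ?thesis using h i unfolding is_ascent_seq_def by (simp add: nth_append)
      next
        case False
        then have "i = length xs" using i by simp
        then show ?thesis using h by simp
      qed
    qed
  qed
qed

lemma avoid_snoc:
  "avoids021 (xs @ [a]) \<longleftrightarrow> avoids021 xs \<and>
     (\<forall>i j. i < j \<and> j < length xs \<longrightarrow> \<not> (xs ! i < a \<and> a < xs ! j))"
  unfolding avoids021_def
proof safe
  fix i j k
  assume h: "\<not> (\<exists>i j k. i < j \<and> j < k \<and> k < length (xs @ [a]) \<and> (xs @ [a]) ! i < (xs @ [a]) ! k \<and> (xs @ [a]) ! k < (xs @ [a]) ! j)"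
    and hh: "i < j" "j < k" "k < length xs" "xs ! i < xs ! k" "xs ! k < xs ! j"
  have "i < j \<and> j < k \<and> k < length (xs @ [a]) \<and> (xs @ [a]) ! i < (xs @ [a]) ! k \<and> (xs @ [a]) ! k < (xs @ [a]) ! j"
    using hh by (simp add: nth_append)
  with h show False by blast
next
  fix i j
  assume h: "\<not> (\<exists>i j k. i < j \<and> j < k \<and> k < length (xs @ [a]) \<and> (xs @ [a]) ! i < (xs @ [a]) ! k \<and> (xs @ [a]) ! k < (xs @ [a]) ! j)"
    and hh: "i < j" "j < length xs" "xs ! i < a" "a < xs ! j"
  have "i < j \<and> j < length xs \<and> length xs < length (xs @ [a]) \<and> (xs @ [a]) ! i < (xs @ [a]) ! length xs \<and> (xs @ [a]) ! length xs < (xs @ [a]) ! j"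
    using hh by (simp add: nth_append)
  with h show False by blast
next
  fix i j k
  assume h1: "\<not> (\<exists>i j k. i < j \<and> j < k \<and> k < length xs \<and> xs ! i < xs ! k \<and> xs ! k < xs ! j)"
    and h2: "\<forall>i j. i < j \<and> j < length xs \<longrightarrow> \<not> (xs ! i < a \<and> a < xs ! j)"
    and "i < j" "j < k" "k < length (xs @ [a])" "(xs @ [a]) ! i < (xs @ [a]) ! k" "(xs @ [a]) ! k < (xs @ [a]) ! j"
  then show False
    by (cases "k < length xs") (auto simp: nth_append)
qed

lemma avoid_snoc2:
  assumes "is_ascent_seq xs"
  shows "(\<forall>i j. i < j \<and> j < length xs \<longrightarrow> \<not> (xs ! i < a \<and> a < xs ! j)) \<longleftrightarrow> (a = 0 \<or> Max (set xs) \<le> a)"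
proof
  have ne: "xs \<noteq> []" and z: "xs ! 0 = 0" using assms unfolding is_ascent_seq_def by auto
  assume h: "\<forall>i j. i < j \<and> j < length xs \<longrightarrow> \<not> (xs ! i < a \<and> a < xs ! j)"
  show "a = 0 \<or> Max (set xs) \<le> a"
  proof (cases "a = 0")
    case False
    have "\<forall>x\<in>set xs. x \<le> a"
    proof
      fix x assume "x \<in> set xs"
      then obtain j where j: "j < length xs" "xs ! j = x" by (auto simp: in_set_conv_nth)
      show "x \<le> a"
      proof (cases "j = 0")
        case True then show ?thesis using z j False by simp
      next
        case False
        then show ?thesis using h[rule_format, of 0 j] j z \<open>a \<noteq> 0\<close> by auto
      qed
    qed
    then show ?thesis using ne by simp
  qed simp
next
  assume h: "a = 0 \<or> Max (set xs) \<le> a"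
  show "\<forall>i j. i < j \<and> j < length xs \<longrightarrow> \<not> (xs ! i < a \<and> a < xs ! j)"
  proof (intro allI impI)
    fix i j assume ij: "i < j \<and> j < length xs"
    have "xs ! j \<le> Max (set xs)" using ij by (intro Max_ge) auto
    then show "\<not> (xs ! i < a \<and> a < xs ! j)" using h by auto
  qed
qed

lemma SS_snoc:
  assumes "xs \<noteq> []"
  shows "xs @ [a] \<in> SS (Suc n) \<longleftrightarrow> xs \<in> SS n \<and> a \<in> allowed xs"
proof -
  have "xs @ [a] \<in> SS (Suc n) \<longleftrightarrow> length xs = n \<and> is_ascent_seq xs \<and> a \<le> asc xs + 1 \<and> avoids021 xs \<and>
     (\<forall>i j. i < j \<and> j < length xs \<longrightarrow> \<not> (xs ! i < a \<and> a < xs ! j))"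
    unfolding SS_def using ascent_snoc[OF assms] avoid_snoc[of xs a] by auto
  also have "\<dots> \<longleftrightarrow> length xs = n \<and> is_ascent_seq xs \<and> a \<le> asc xs + 1 \<and> avoids021 xs \<and>
     (a = 0 \<or> Max (set xs) \<le> a)"
    using avoid_snoc2 by blast
  also have "\<dots> \<longleftrightarrow> xs \<in> SS n \<and> a \<in> allowed xs"
    unfolding SS_def allowed_def by auto
  finally show ?thesis .
qed

lemma SS_ne: "xs \<in> SS n \<Longrightarrow> xs \<noteq> []"
  unfolding SS_def is_ascent_seq_def by auto

lemma single_ascent: "is_ascent_seq [x] \<longleftrightarrow> x = 0"
  unfolding is_ascent_seq_def by auto

lemma seq_inv:
  "is_ascent_seq xs \<Longrightarrow> avoids021 xs \<Longrightarrow>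
    (last xs = 0 \<or> last xs = Max (set xs)) \<and> Max (set xs) \<le> asc xs"
proof (induction xs rule: rev_induct)
  case Nil
  then show ?case unfolding is_ascent_seq_def by simp
next
  case (snoc x xs)
  show ?case
  proof (cases "xs = []")
    case True
    then have "x = 0" using snoc.prems single_ascent by simp
    then show ?thesis using True by simp
  next
    case False
    have A: "is_ascent_seq xs" "x \<le> asc xs + 1" using ascent_snoc[OF False] snoc.prems by auto
    have B: "avoids021 xs" "x = 0 \<or> Max (set xs) \<le> x"
      using avoid_snoc[of xs x] avoid_snoc2[OF A(1), of x] snoc.prems by auto
    from snoc.IH[OF A(1) B(1)] have IH: "last xs = 0 \<or> last xs = Max (set xs)" "Max (set xs) \<le> asc xs" by auto
    have M: "Max (set (xs @ [x])) = max x (Max (set xs))" using False by simp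
    have L: "last xs \<le> Max (set xs)" using False by simp
    show ?thesis
      using B(2) IH L A(2) unfolding M asc_snoc[OF False] by auto
  qed
qed

lemma SS_inv:
  assumes "xs \<in> SS n"
  shows "last xs = 0 \<or> last xs = Max (set xs)" "Max (set xs) \<le> asc xs"
  using seq_inv assms unfolding SS_def by auto

lemma SS_1: "SS (Suc 0) = {[0]}"
proof (rule set_eqI)
  fix xs
  show "xs \<in> SS (Suc 0) \<longleftrightarrow> xs \<in> {[0]}"
  proof
    assume "xs \<in> SS (Suc 0)"
    then obtain x where "xs = [x]" "is_ascent_seq [x]" unfolding SS_def by (auto simp: length_Suc_conv)
    then show "xs \<in> {[0]}" using single_ascent by simp
  next
    assume "xs \<in> {[0]}"
    then show "xs \<in> SS (Suc 0)" unfolding SS_def avoids021_def using single_ascent by auto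
  qed
qed

lemma SS_0: "SS 0 = {}"
  unfolding SS_def is_ascent_seq_def by auto

lemma SS_Suc:
  assumes "n \<ge> 1"
  shows "SS (Suc n) = (\<lambda>(xs, a). xs @ [a]) ` (SIGMA xs:SS n. allowed xs)"
proof (rule set_eqI)
  fix ys
  show "ys \<in> SS (Suc n) \<longleftrightarrow> ys \<in> (\<lambda>(xs, a). xs @ [a]) ` (SIGMA xs:SS n. allowed xs)"
  proof
    assume h: "ys \<in> SS (Suc n)"
    then have len: "length ys = Suc n" unfolding SS_def by simp
    then have ne: "butlast ys \<noteq> []" using assms by (cases ys rule: rev_cases) auto
    have eq: "ys = butlast ys @ [last ys]" using len by (cases ys rule: rev_cases) auto
    then have "butlast ys \<in> SS n \<and> last ys \<in> allowed (butlast ys)"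
      using SS_snoc[OF ne, of "last ys" n] h by simp
    then show "ys \<in> (\<lambda>(xs, a). xs @ [a]) ` (SIGMA xs:SS n. allowed xs)"
      using eq by (auto intro!: image_eqI[of _ _ "(butlast ys, last ys)"])
  next
    assume "ys \<in> (\<lambda>(xs, a). xs @ [a]) ` (SIGMA xs:SS n. allowed xs)"
    then obtain xs a where "ys = xs @ [a]" "xs \<in> SS n" "a \<in> allowed xs" by auto
    then show "ys \<in> SS (Suc n)" using SS_snoc[OF SS_ne] by blast
  qed
qed

lemma finite_allowed: "finite (allowed xs)"
  by (rule finite_subset[of _ "{..asc xs + 1}"]) (auto simp: allowed_def)

lemma finite_SS: "finite (SS n)"
proof (induction n)
  case 0
  then show ?case by (simp add: SS_0)
next
  case (Suc n)
  show ?case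
  proof (cases "n = 0")
    case True then show ?thesis by (simp add: SS_1)
  next
    case False
    then show ?thesis using SS_Suc[of n] Suc.IH finite_allowed by auto
  qed
qed

lemma sum_SS_Suc:
  assumes "n \<ge> 1"
  shows "(\<Sum>ys\<in>SS (Suc n). F ys) = (\<Sum>xs\<in>SS n. \<Sum>a\<in>allowed xs. F (xs @ [a]))"
proof -
  have inj: "inj_on (\<lambda>(xs, a). xs @ [a]) (SIGMA xs:SS n. allowed xs)"
    by (auto simp: inj_on_def)
  have "(\<Sum>ys\<in>SS (Suc n). F ys) = (\<Sum>p\<in>(SIGMA xs:SS n. allowed xs). F ((\<lambda>(xs, a). xs @ [a]) p))"
    unfolding SS_Suc[OF assms] by (rule sum.reindex[OF inj, unfolded comp_def])
  also have "\<dots> = (\<Sum>xs\<in>SS n. \<Sum>a\<in>allowed xs. F (xs @ [a]))"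
  proof -
    have e: "(\<lambda>p. F ((\<lambda>(xs, a). xs @ [a]) p)) = (\<lambda>(xs, a). F (xs @ [a]))" by auto
    show ?thesis unfolding e
      by (rule sum.Sigma[symmetric]) (auto simp: finite_SS finite_allowed)
  qed
  finally show ?thesis .
qed

lemma asc_lt: "xs \<in> SS n \<Longrightarrow> asc xs < n"
  using asc_le[of xs] SS_ne[of xs n] unfolding SS_def by (cases xs) auto

lemma last_le_Max: "xs \<noteq> [] \<Longrightarrow> last xs \<le> Max (set xs)"
  by simp

lemma generic_sum:
  fixes h :: "nat \<Rightarrow> nat \<Rightarrow> nat \<Rightarrow> real"
  shows "(\<Sum>m<n. \<Sum>r\<le>m. \<Sum>s\<le>r. real (a_cnt n m r s) * h m r s) =
         (\<Sum>xs\<in>SS n. h (asc xs) (Max (set xs)) (last xs))"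
proof -
  have c: "real (a_cnt n m r s) * h m r s =
     (\<Sum>xs\<in>SS n. if asc xs = m then (if Max (set xs) = r then (if last xs = s then h m r s else 0) else 0) else 0)"
    for m r s
  proof -
    have "{xs. length xs = n \<and> is_ascent_seq xs \<and> avoids021 xs \<and>
       asc xs = m \<and> Max (set xs) = r \<and> last xs = s} = {xs\<in>SS n. asc xs = m \<and> Max (set xs) = r \<and> last xs = s}"
      unfolding SS_def by auto
    then have "real (a_cnt n m r s) = (\<Sum>xs\<in>{xs\<in>SS n. asc xs = m \<and> Max (set xs) = r \<and> last xs = s}. 1)"
      unfolding a_cnt_def by simp
    also have "\<dots> = (\<Sum>xs\<in>SS n. if asc xs = m \<and> Max (set xs) = r \<and> last xs = s then 1 else 0)"
      by (rule sum.inter_filter[OF finite_SS])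
    finally show ?thesis by (auto simp: sum_distrib_right intro!: sum.cong)
  qed
  have "(\<Sum>m<n. \<Sum>r\<le>m. \<Sum>s\<le>r. real (a_cnt n m r s) * h m r s) =
     (\<Sum>m<n. \<Sum>r\<le>m. \<Sum>s\<le>r. \<Sum>xs\<in>SS n. if asc xs = m then (if Max (set xs) = r then (if last xs = s then h m r s else 0) else 0) else 0)"
    by (simp only: c)
  also have "\<dots> = (\<Sum>xs\<in>SS n. \<Sum>m<n. \<Sum>r\<le>m. \<Sum>s\<le>r. if asc xs = m then (if Max (set xs) = r then (if last xs = s then h m r s else 0) else 0) else 0)"
    by (simp only: sum.swap[where B="SS n"])
  also have "\<dots> = (\<Sum>xs\<in>SS n. h (asc xs) (Max (set xs)) (last xs))"
  proof (rule sum.cong[OF refl])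
    fix xs assume xs: "xs \<in> SS n"
    have b1: "asc xs < n" using asc_lt[OF xs] .
    have b2: "Max (set xs) \<le> asc xs" using SS_inv(2)[OF xs] .
    have b3: "last xs \<le> Max (set xs)" using last_le_Max SS_ne[OF xs] by blast
    have "(\<Sum>m<n. \<Sum>r\<le>m. \<Sum>s\<le>r. if asc xs = m then (if Max (set xs) = r then (if last xs = s then h m r s else 0) else 0) else 0)
        = (\<Sum>m<n. if asc xs = m then (\<Sum>r\<le>m. \<Sum>s\<le>r. if Max (set xs) = r then (if last xs = s then h m r s else 0) else 0) else 0)"
      by (rule sum.cong[OF refl]) auto
    also have "\<dots> = (\<Sum>r\<le>asc xs. \<Sum>s\<le>r. if Max (set xs) = r then (if last xs = s then h (asc xs) r s else 0) else 0)"
      using b1 by (simp add: sum.delta)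
    also have "\<dots> = (\<Sum>r\<le>asc xs. if Max (set xs) = r then (\<Sum>s\<le>r. if last xs = s then h (asc xs) r s else 0) else 0)"
      by (rule sum.cong[OF refl]) auto
    also have "\<dots> = (\<Sum>s\<le>Max (set xs). if last xs = s then h (asc xs) (Max (set xs)) s else 0)"
      using b2 by (simp add: sum.delta)
    also have "\<dots> = h (asc xs) (Max (set xs)) (last xs)"
      using b3 by (simp add: sum.delta)
    finally show "(\<Sum>m<n. \<Sum>r\<le>m. \<Sum>s\<le>r. if asc xs = m then (if Max (set xs) = r then (if last xs = s then h m r s else 0) else 0) else 0)
        = h (asc xs) (Max (set xs)) (last xs)" .
  qed
  finally show ?thesis .
qed

lemma A_sum: "A_poly n u v w = (\<Sum>xs\<in>SS n. u ^ last xs * v ^ Max (set xs) * w ^ asc xs)"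
proof -
  have "A_poly n u v w = (\<Sum>m<n. \<Sum>r\<le>m. \<Sum>s\<le>r. real (a_cnt n m r s) * (u ^ s * v ^ r * w ^ m))"
    unfolding A_poly_def by (simp add: sum_distrib_right mult.assoc)
  then show ?thesis using generic_sum[of n "\<lambda>m r s. u ^ s * v ^ r * w ^ m"] by simp
qed

lemma B_sum: "B_poly n v w = (\<Sum>xs\<in>SS n. if last xs = Max (set xs) then v ^ Max (set xs) * w ^ asc xs else 0)"
proof -
  have "B_poly n v w = (\<Sum>m<n. \<Sum>r\<le>m. \<Sum>s\<le>r. real (a_cnt n m r s) * (if s = r then v ^ r * w ^ m else 0))"
    unfolding B_poly_def by (simp add: sum_distrib_right mult.assoc if_distrib cong: if_cong)
  then show ?thesis using generic_sum[of n "\<lambda>m r s. if s = r then v ^ r * w ^ m else 0"] by simp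
qed

lemma Z_sum:
  assumes "n \<ge> 1"
  shows "(\<Sum>xs\<in>SS n. if Max (set xs) = 0 then G xs else 0) = G (replicate n 0)"
proof -
  have e: "{xs\<in>SS n. Max (set xs) = 0} = {replicate n 0}"
  proof (rule set_eqI)
    fix xs
    show "xs \<in> {xs\<in>SS n. Max (set xs) = 0} \<longleftrightarrow> xs \<in> {replicate n 0}"
    proof
      assume h: "xs \<in> {xs\<in>SS n. Max (set xs) = 0}"
      then have ne: "xs \<noteq> []" and len: "length xs = n" using SS_ne unfolding SS_def by auto
      have "\<forall>y\<in>set xs. y = 0"
      proof
        fix y assume "y \<in> set xs"
        then have "y \<le> Max (set xs)" by simp
        then show "y = 0" using h by simp
      qed
      then have "xs = replicate n 0" using len by (intro replicate_eqI) auto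
      then show "xs \<in> {replicate n 0}" by simp
    next
      assume "xs \<in> {replicate n 0}"
      then have xs: "xs = replicate n 0" by simp
      have "is_ascent_seq xs" using assms unfolding xs is_ascent_seq_def by auto
      moreover have "avoids021 xs" unfolding xs avoids021_def by auto
      moreover have "Max (set xs) = 0" using assms unfolding xs by simp
      ultimately show "xs \<in> {xs\<in>SS n. Max (set xs) = 0}" unfolding SS_def xs by simp
    qed
  qed
  have "(\<Sum>xs\<in>SS n. if Max (set xs) = 0 then G xs else 0) = (\<Sum>xs\<in>{xs\<in>SS n. Max (set xs) = 0}. G xs)"
    by (rule sum.inter_filter[OF finite_SS, symmetric])
  then show ?thesis unfolding e by simp
qed

lemma asc_rep0: "asc (replicate n 0) = 0"
proof -
  have E: "{j. Suc j < n \<and> replicate n (0::nat) ! j < replicate n 0 ! Suc j} = {}" by auto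
  show ?thesis unfolding asc_def length_replicate E by simp
qed

lemma allowed_eq: "allowed xs = insert 0 {max (Max (set xs)) 1..asc xs + 1}"
  unfolding allowed_def by auto

lemma inner1:
  fixes u v w :: real
  assumes xs: "xs \<in> SS n" and q1: "u * v \<noteq> 1"
  shows "(\<Sum>a\<in>allowed xs. u ^ last (xs @ [a]) * v ^ Max (set (xs @ [a])) * w ^ asc (xs @ [a])) =
    v ^ Max (set xs) * w ^ asc xs + w / (1 - u * v) * ((u * v) ^ Max (set xs) * w ^ asc xs)
    - (u * v) ^ 2 * w / (1 - u * v) * (u * v * w) ^ asc xs
    + (1 - w) * (if last xs = Max (set xs) then (u * v) ^ Max (set xs) * w ^ asc xs else 0)
    - (if Max (set xs) = 0 then w ^ asc xs else 0)"
proof -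
  define r where "r = Max (set xs)"
  define m where "m = asc xs"
  define s where "s = last xs"
  define q where "q = u * v"
  have ne: "xs \<noteq> []" using SS_ne[OF xs] .
  have hs: "s = 0 \<or> s = r" and hr: "r \<le> m" using SS_inv[OF xs] unfolding r_def m_def s_def by auto
  have sr: "s \<le> r" using ne unfolding s_def r_def by simp
  have step: "u ^ last (xs @ [a]) * v ^ Max (set (xs @ [a])) * w ^ asc (xs @ [a]) =
      u ^ a * v ^ max a r * w ^ (m + (if s < a then 1 else 0))" for a
    using ne unfolding r_def m_def s_def asc_snoc[OF ne] by simp
  define G where "G = (\<Sum>a=r..m+1. q ^ a)"
  have G: "(1 - q) * G = q ^ r - q ^ Suc (m + 1)"
    unfolding G_def by (rule sum_gp_multiplied) (use hr in simp)
  have q1': "1 - q \<noteq> 0" using q1 unfolding q_def by simp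
  have mid: "w / (1 - q) * (q ^ r * w ^ m) - q ^ 2 * w / (1 - q) * (q * w) ^ m = w ^ (m + 1) * G"
  proof -
    have Ge: "G = (q ^ r - q ^ Suc (m + 1)) / (1 - q)" using G q1' by (simp add: field_simps)
    have l: "w / (1 - q) * (q ^ r * w ^ m) - q ^ 2 * w / (1 - q) * (q * w) ^ m =
       (w * (q ^ r * w ^ m) - q ^ 2 * w * (q * w) ^ m) / (1 - q)"
      by (simp add: diff_divide_distrib)
    have n: "w * (q ^ r * w ^ m) - q ^ 2 * w * (q * w) ^ m = w ^ (m + 1) * (q ^ r - q ^ Suc (m + 1))"
      by (simp add: power_mult_distrib algebra_simps power2_eq_square)
    show ?thesis unfolding l n Ge by simp
  qed
  have LHS: "(\<Sum>a\<in>allowed xs. u ^ last (xs @ [a]) * v ^ Max (set (xs @ [a])) * w ^ asc (xs @ [a])) =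
     v ^ r * w ^ m + (\<Sum>a\<in>{max r 1..m+1}. u ^ a * v ^ a * w ^ (m + (if s < a then 1 else 0)))"
  proof -
    have "(\<Sum>a\<in>allowed xs. u ^ last (xs @ [a]) * v ^ Max (set (xs @ [a])) * w ^ asc (xs @ [a])) =
      (\<Sum>a\<in>insert 0 {max r 1..m+1}. u ^ a * v ^ max a r * w ^ (m + (if s < a then 1 else 0)))"
      unfolding step allowed_eq r_def m_def ..
    also have "\<dots> = v ^ r * w ^ m + (\<Sum>a\<in>{max r 1..m+1}. u ^ a * v ^ max a r * w ^ (m + (if s < a then 1 else 0)))"
      by (subst sum.insert) auto
    also have "(\<Sum>a\<in>{max r 1..m+1}. u ^ a * v ^ max a r * w ^ (m + (if s < a then 1 else 0))) =
       (\<Sum>a\<in>{max r 1..m+1}. u ^ a * v ^ a * w ^ (m + (if s < a then 1 else 0)))"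
      by (rule sum.cong) auto
    finally show ?thesis .
  qed
  have qa: "u ^ a * v ^ a = q ^ a" for a unfolding q_def by (simp add: power_mult_distrib)
  have main: "v ^ r * w ^ m + (\<Sum>a\<in>{max r 1..m+1}. u ^ a * v ^ a * w ^ (m + (if s < a then 1 else 0))) =
     v ^ r * w ^ m + w ^ (m + 1) * G + (1 - w) * (if s = r then q ^ r * w ^ m else 0) - (if r = 0 then w ^ m else 0)"
  proof (cases "r = 0")
    case True
    then have s0: "s = 0" using sr by simp
    have "(\<Sum>a\<in>{max r 1..m+1}. u ^ a * v ^ a * w ^ (m + (if s < a then 1 else 0))) = (\<Sum>a\<in>{Suc 0..m+1}. w ^ (m + 1) * q ^ a)"
      using True s0 by (intro sum.cong) (auto simp: qa)
    also have "\<dots> = w ^ (m + 1) * (\<Sum>a\<in>{Suc 0..m+1}. q ^ a)" by (rule sum_distrib_left[symmetric])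
    finally have e1: "(\<Sum>a\<in>{max r 1..m+1}. u ^ a * v ^ a * w ^ (m + (if s < a then 1 else 0))) = w ^ (m + 1) * (\<Sum>a\<in>{Suc 0..m+1}. q ^ a)" .
    have "G = 1 + (\<Sum>a\<in>{Suc 0..m+1}. q ^ a)" unfolding G_def True
      by (subst sum.atLeast_Suc_atMost) auto
    then show ?thesis unfolding e1 using True s0 by (simp add: algebra_simps)
  next
    case False
    have e0: "max r 1 = r" using False by simp
    show ?thesis
    proof (cases "s = r")
      case True
      have "(\<Sum>a\<in>{r..m+1}. u ^ a * v ^ a * w ^ (m + (if s < a then 1 else 0))) =
          q ^ r * w ^ m + (\<Sum>a\<in>{Suc r..m+1}. u ^ a * v ^ a * w ^ (m + (if s < a then 1 else 0)))"
        using hr True by (subst sum.atLeast_Suc_atMost) (auto simp: qa)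
      also have "(\<Sum>a\<in>{Suc r..m+1}. u ^ a * v ^ a * w ^ (m + (if s < a then 1 else 0))) = (\<Sum>a\<in>{Suc r..m+1}. w ^ (m + 1) * q ^ a)"
        using True by (intro sum.cong) (auto simp: qa)
      also have "\<dots> = w ^ (m + 1) * (\<Sum>a\<in>{Suc r..m+1}. q ^ a)" by (rule sum_distrib_left[symmetric])
      finally have e1: "(\<Sum>a\<in>{r..m+1}. u ^ a * v ^ a * w ^ (m + (if s < a then 1 else 0))) = q ^ r * w ^ m + w ^ (m + 1) * (\<Sum>a\<in>{Suc r..m+1}. q ^ a)" .
      have "G = q ^ r + (\<Sum>a\<in>{Suc r..m+1}. q ^ a)" unfolding G_def
        using hr by (subst sum.atLeast_Suc_atMost) auto
      then show ?thesis unfolding e0 e1 using True False by (simp add: algebra_simps)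
    next
      case ns: False
      then have s0: "s = 0" using hs by simp
      have "(\<Sum>a\<in>{r..m+1}. u ^ a * v ^ a * w ^ (m + (if s < a then 1 else 0))) = (\<Sum>a\<in>{r..m+1}. w ^ (m + 1) * q ^ a)"
        using False s0 by (intro sum.cong) (auto simp: qa)
      also have "\<dots> = w ^ (m + 1) * G" unfolding G_def by (rule sum_distrib_left[symmetric])
      finally show ?thesis unfolding e0 using ns False by simp
    qed
  qed
  show ?thesis
    unfolding LHS main
    using mid unfolding q_def[symmetric] r_def[symmetric] m_def[symmetric] s_def[symmetric]
    by (simp add: algebra_simps)
qed



lemma R1:
  fixes u v w :: real
  assumes n: "n \<ge> 1" and q1: "u * v \<noteq> 1"
  shows "A_poly (Suc n) u v w = A_poly n 1 v w + w / (1 - u * v) * A_poly n 1 (u * v) w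
     - (u * v) ^ 2 * w / (1 - u * v) * A_poly n 1 1 (u * v * w) + (1 - w) * B_poly n (u * v) w - 1"
proof -
  have "A_poly (Suc n) u v w = (\<Sum>xs\<in>SS n. \<Sum>a\<in>allowed xs. u ^ last (xs @ [a]) * v ^ Max (set (xs @ [a])) * w ^ asc (xs @ [a]))"
    unfolding A_sum by (rule sum_SS_Suc[OF n])
  also have "\<dots> = (\<Sum>xs\<in>SS n. v ^ Max (set xs) * w ^ asc xs + w / (1 - u * v) * ((u * v) ^ Max (set xs) * w ^ asc xs)
    - (u * v) ^ 2 * w / (1 - u * v) * (u * v * w) ^ asc xs
    + (1 - w) * (if last xs = Max (set xs) then (u * v) ^ Max (set xs) * w ^ asc xs else 0)
    - (if Max (set xs) = 0 then w ^ asc xs else 0))"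
    by (rule sum.cong[OF refl]) (rule inner1[OF _ q1])
  also have "\<dots> = (\<Sum>xs\<in>SS n. v ^ Max (set xs) * w ^ asc xs) + w / (1 - u * v) * (\<Sum>xs\<in>SS n. (u * v) ^ Max (set xs) * w ^ asc xs)
    - (u * v) ^ 2 * w / (1 - u * v) * (\<Sum>xs\<in>SS n. (u * v * w) ^ asc xs)
    + (1 - w) * (\<Sum>xs\<in>SS n. if last xs = Max (set xs) then (u * v) ^ Max (set xs) * w ^ asc xs else 0)
    - (\<Sum>xs\<in>SS n. if Max (set xs) = 0 then w ^ asc xs else 0)"
    by (simp only: sum.distrib sum_subtractf sum_distrib_left)
  also have "(\<Sum>xs\<in>SS n. if Max (set xs) = 0 then w ^ asc xs else 0) = 1"
    using Z_sum[OF n, of "\<lambda>xs. w ^ asc xs"] by (simp add: asc_rep0)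
  finally show ?thesis by (simp add: A_sum B_sum)
qed

lemma inner3:
  fixes v w :: real
  assumes xs: "xs \<in> SS n"
  shows "(\<Sum>a\<in>allowed xs. if last (xs @ [a]) = Max (set (xs @ [a])) then 0
            else v ^ Max (set (xs @ [a])) * w ^ asc (xs @ [a])) =
         (if Max (set xs) = 0 then 0 else v ^ Max (set xs) * w ^ asc xs)"
proof -
  have ne: "xs \<noteq> []" using SS_ne[OF xs] .
  have "(\<Sum>a\<in>allowed xs. if last (xs @ [a]) = Max (set (xs @ [a])) then 0
            else v ^ Max (set (xs @ [a])) * w ^ asc (xs @ [a])) =
        (\<Sum>a\<in>insert 0 {max (Max (set xs)) 1..asc xs + 1}. if a = max a (Max (set xs)) then 0
            else v ^ max a (Max (set xs)) * w ^ asc (xs @ [a]))"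
    unfolding allowed_eq using ne by simp
  also have "\<dots> = (if Max (set xs) = 0 then 0 else v ^ Max (set xs) * w ^ asc xs)
     + (\<Sum>a\<in>{max (Max (set xs)) 1..asc xs + 1}. if a = max a (Max (set xs)) then 0
            else v ^ max a (Max (set xs)) * w ^ asc (xs @ [a]))"
    by (subst sum.insert) (auto simp: asc_snoc[OF ne])
  also have "(\<Sum>a\<in>{max (Max (set xs)) 1..asc xs + 1}. if a = max a (Max (set xs)) then 0
            else v ^ max a (Max (set xs)) * w ^ asc (xs @ [a])) = 0"
    by (rule sum.neutral) auto
  finally show ?thesis by simp
qed

lemma R3:
  fixes v w :: real
  assumes n: "n \<ge> 1"
  shows "A_poly (Suc n) 1 v w - B_poly (Suc n) v w = A_poly n 1 v w - 1"
proof -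
  have "A_poly (Suc n) 1 v w - B_poly (Suc n) v w = (\<Sum>ys\<in>SS (Suc n). if last ys = Max (set ys) then 0
            else v ^ Max (set ys) * w ^ asc ys)"
    unfolding A_sum B_sum by (auto simp: sum_subtractf[symmetric] intro!: sum.cong)
  also have "\<dots> = (\<Sum>xs\<in>SS n. \<Sum>a\<in>allowed xs. if last (xs @ [a]) = Max (set (xs @ [a])) then 0
            else v ^ Max (set (xs @ [a])) * w ^ asc (xs @ [a]))"
    by (rule sum_SS_Suc[OF n])
  also have "\<dots> = (\<Sum>xs\<in>SS n. (if Max (set xs) = 0 then 0 else v ^ Max (set xs) * w ^ asc xs))"
    by (rule sum.cong[OF refl]) (rule inner3)
  also have "\<dots> = (\<Sum>xs\<in>SS n. v ^ Max (set xs) * w ^ asc xs) - (\<Sum>xs\<in>SS n. if Max (set xs) = 0 then v ^ Max (set xs) * w ^ asc xs else 0)"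
    by (auto simp: sum_subtractf[symmetric] intro!: sum.cong)
  also have "(\<Sum>xs\<in>SS n. if Max (set xs) = 0 then v ^ Max (set xs) * w ^ asc xs else 0) = 1"
    using Z_sum[OF n, of "\<lambda>xs. v ^ Max (set xs) * w ^ asc xs"] n by (simp add: asc_rep0)
  finally show ?thesis by (simp add: A_sum)
qed

lemma A1: "A_poly (Suc 0) u v w = 1"
  unfolding A_sum SS_1 by (simp add: asc_def)

lemma B1: "B_poly (Suc 0) v w = 1"
  unfolding B_sum SS_1 by (simp add: asc_def)

lemma A0: "A_poly 0 u v w = 0"
  unfolding A_poly_def by simp


unbundle fps_syntax

lemma f_nth: "f_gf u v w $ n = A_poly n u v w"
  unfolding f_gf_def by (simp add: A0)

lemma B0: "B_poly 0 v w = 0"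
  unfolding B_poly_def by simp

lemma g_nth: "g_gf v w $ n = B_poly n v w"
  unfolding g_gf_def by (simp add: B0)

lemma cP:
  fixes c :: real and k :: real
  shows "((fps_X - fps_const k * fps_X ^ 2 - fps_const c * fps_X ^ 3) * inverse (1 - fps_X)) $ N =
     (if N \<ge> 1 then 1 else 0) - (if N \<ge> 2 then k else 0) - (if N \<ge> 3 then c else 0)"
proof -
  define I :: "real fps" where "I = Abs_fps (\<lambda>_. 1)"
  have "(fps_X - fps_const k * fps_X ^ 2 - fps_const c * fps_X ^ 3) * inverse (1 - fps_X) =
     fps_X ^ 1 * I - fps_const k * (fps_X ^ 2 * I) - fps_const c * (fps_X ^ 3 * I)"
    unfolding I_def fps_inverse_one_minus_fps_X by (simp add: algebra_simps)
  then show ?thesis by (simp only: fps_sub_nth fps_mult_left_const_nth fps_X_power_mult_nth) (simp add: I_def)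
qed

lemma alg1:
  fixes a A1v z A2 c A3 w Bq D e p :: real
  assumes "a = A1v + z * A2 - c * A3 + (1 - w) * Bq - 1" "p = z - w" "A2 = Bq + D - e"
  shows "a = 1 - 2 - e * w + (Bq + A1v + p * A2 - c * A3) + w * D"
  unfolding assms(1) assms(2) assms(3) by (simp add: algebra_simps)

lemma alg2:
  fixes a b A1v z c A3 w Bn D e p :: real
  assumes "a = A1v + z * A1v - c * A3 + (1 - w) * Bn - 1" "a - b = A1v - 1" "p = z - w" "A1v = Bn + D - e"
  shows "b - Bn = 1 - 1 - e * w + w * D + p * A1v - c * A3"
proof -
  have b: "b = a - A1v + 1" using assms(2) by simp
  show ?thesis unfolding b assms(1) assms(3) assms(4) by (simp add: algebra_simps)
qed

lemma eq1:
  fixes u v w :: real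
  assumes q1: "u * v \<noteq> 1"
  shows "f_gf u v w =
        (fps_X - 2 * fps_X ^ 2 - fps_const w * fps_X ^ 3) * inverse (1 - fps_X)
        + fps_X * g_gf (u * v) w
        + fps_X * f_gf 1 v w
        + (fps_const w * fps_X ^ 2 + fps_const (u * v * w / (1 - u * v)) * fps_X) * f_gf 1 (u * v) w
        - fps_const (u ^ 2 * v ^ 2 * w / (1 - u * v)) * fps_X * f_gf 1 1 (u * v * w)"
proof (rule fps_ext)
  fix N
  have two: "(2 :: real fps) = fps_const 2" by (simp add: numeral_fps_const)
  have R: "(fps_X - 2 * fps_X ^ 2 - fps_const w * fps_X ^ 3) * inverse (1 - fps_X)
        + fps_X * g_gf (u * v) w
        + fps_X * f_gf 1 v w
        + (fps_const w * fps_X ^ 2 + fps_const (u * v * w / (1 - u * v)) * fps_X) * f_gf 1 (u * v) w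
        - fps_const (u ^ 2 * v ^ 2 * w / (1 - u * v)) * fps_X * f_gf 1 1 (u * v * w) =
      (fps_X - fps_const 2 * fps_X ^ 2 - fps_const w * fps_X ^ 3) * inverse (1 - fps_X)
        + fps_X * g_gf (u * v) w
        + fps_X * f_gf 1 v w
        + fps_const w * (fps_X ^ 2 * f_gf 1 (u * v) w) + fps_const (u * v * w / (1 - u * v)) * (fps_X * f_gf 1 (u * v) w)
        - fps_const (u ^ 2 * v ^ 2 * w / (1 - u * v)) * (fps_X * f_gf 1 1 (u * v * w))" (is "?RHS = ?R2")
    unfolding two by (simp add: algebra_simps)
  have RN: "?R2 $ N = (if N \<ge> 1 then 1 else 0) - (if N \<ge> 2 then 2 else 0) - (if N \<ge> 3 then w else 0)
     + (if N = 0 then 0 else B_poly (N - 1) (u * v) w + A_poly (N - 1) 1 v w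
        + u * v * w / (1 - u * v) * A_poly (N - 1) 1 (u * v) w
        - u ^ 2 * v ^ 2 * w / (1 - u * v) * A_poly (N - 1) 1 1 (u * v * w))
     + (if N < 2 then 0 else w * A_poly (N - 2) 1 (u * v) w)"
    by (simp only: fps_add_nth fps_sub_nth fps_mult_left_const_nth fps_X_power_mult_nth fps_X_mult_nth cP f_nth g_nth)
       (simp add: A0)
  show "f_gf u v w $ N = ?RHS $ N"
  proof (cases N)
    case 0 then show ?thesis unfolding R RN f_nth by (simp add: A0)
  next
    case (Suc n)
    show ?thesis
    proof (cases n)
      case 0 then show ?thesis unfolding R RN f_nth using Suc by (simp add: A1 A0 B0)
    next
      case (Suc k)
      have n1: "n \<ge> 1" using Suc by simp
      define Q where "Q = u * v"
      have Q1: "1 - Q \<noteq> 0" using q1 unfolding Q_def by simp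
      have QQ: "u ^ 2 * v ^ 2 = Q ^ 2" unfolding Q_def by (simp add: power_mult_distrib)
      have r1: "A_poly (Suc n) u v w = A_poly n 1 v w + w / (1 - Q) * A_poly n 1 Q w
          - Q ^ 2 * w / (1 - Q) * A_poly n 1 1 (Q * w) + (1 - w) * B_poly n Q w - 1"
        using R1[OF n1 q1, of w] unfolding Q_def .
      have e: "Q * w / (1 - Q) = w / (1 - Q) - w" using Q1 by (simp add: field_simps)
      have G: "?RHS $ N = 1 - 2 - (if k \<ge> 1 then 1 else 0) * w
         + (B_poly n Q w + A_poly n 1 v w + Q * w / (1 - Q) * A_poly n 1 Q w
            - Q ^ 2 * w / (1 - Q) * A_poly n 1 1 (Q * w)) + w * (if k \<ge> 1 then A_poly k 1 Q w else 0)"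
        unfolding R RN using \<open>N = Suc n\<close> Suc by (cases k) (simp_all add: QQ Q_def A0 mult.assoc)
      have r3: "A_poly n 1 Q w = B_poly n Q w + (if k \<ge> 1 then A_poly k 1 Q w else 0) - (if k \<ge> 1 then 1 else 0)"
      proof (cases "k \<ge> 1")
        case True then show ?thesis using R3[OF True, of Q w] Suc by simp
      next
        case False then have "k = 0" by simp
        then show ?thesis using Suc by (simp add: A1 B1)
      qed
      show ?thesis unfolding G unfolding f_nth \<open>N = Suc n\<close>
        by (rule alg1[OF r1 e r3])
    qed
  qed
qed

lemma eq2:
  fixes v w :: real
  assumes q1: "v \<noteq> 1"
  shows "(1 - fps_X) * g_gf v w =
        (fps_X - fps_X ^ 2 - fps_const w * fps_X ^ 3) * inverse (1 - fps_X)
        + (fps_const w * fps_X ^ 2 + fps_const (v * w / (1 - v)) * fps_X) * f_gf 1 v w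
        - fps_const (v ^ 2 * w / (1 - v)) * fps_X * f_gf 1 1 (v * w)"
proof (rule fps_ext)
  fix N
  have L: "(1 - fps_X) * g_gf v w = g_gf v w - fps_X * g_gf v w" by (simp add: algebra_simps)
  have LN: "((1 - fps_X) * g_gf v w) $ N = B_poly N v w - (if N = 0 then 0 else B_poly (N - 1) v w)"
    unfolding L by (simp add: g_nth)
  have R: "(fps_X - fps_X ^ 2 - fps_const w * fps_X ^ 3) * inverse (1 - fps_X)
        + (fps_const w * fps_X ^ 2 + fps_const (v * w / (1 - v)) * fps_X) * f_gf 1 v w
        - fps_const (v ^ 2 * w / (1 - v)) * fps_X * f_gf 1 1 (v * w) =
      (fps_X - fps_const 1 * fps_X ^ 2 - fps_const w * fps_X ^ 3) * inverse (1 - fps_X)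
        + fps_const w * (fps_X ^ 2 * f_gf 1 v w) + fps_const (v * w / (1 - v)) * (fps_X * f_gf 1 v w)
        - fps_const (v ^ 2 * w / (1 - v)) * (fps_X * f_gf 1 1 (v * w))" (is "?RHS = ?R2")
    by (simp add: algebra_simps)
  have RN: "?R2 $ N = (if N \<ge> 1 then 1 else 0) - (if N \<ge> 2 then 1 else 0) - (if N \<ge> 3 then w else 0)
     + (if N < 2 then 0 else w * A_poly (N - 2) 1 v w)
     + (if N = 0 then 0 else v * w / (1 - v) * A_poly (N - 1) 1 v w
        - v ^ 2 * w / (1 - v) * A_poly (N - 1) 1 1 (v * w))"
    by (simp only: fps_add_nth fps_sub_nth fps_mult_left_const_nth fps_X_power_mult_nth fps_X_mult_nth cP f_nth)
       (simp add: A0)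
  show "((1 - fps_X) * g_gf v w) $ N = ?RHS $ N"
  proof (cases N)
    case 0 then show ?thesis unfolding R RN LN by (simp add: A0 B0)
  next
    case (Suc n)
    show ?thesis
    proof (cases n)
      case 0 then show ?thesis unfolding R RN LN using Suc by (simp add: A1 A0 B0 B1)
    next
      case (Suc k)
      have n1: "n \<ge> 1" using Suc by simp
      have q1': "1 * v \<noteq> 1" using q1 by simp
      have r1: "A_poly (Suc n) 1 v w = A_poly n 1 v w + w / (1 - v) * A_poly n 1 v w
          - v ^ 2 * w / (1 - v) * A_poly n 1 1 (v * w) + (1 - w) * B_poly n v w - 1"
        using R1[OF n1 q1', of w] by simp
      have Q1: "1 - v \<noteq> 0" using q1 by simp
      have e: "v * w / (1 - v) = w / (1 - v) - w" using Q1 by (simp add: field_simps)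
      have r3n: "A_poly (Suc n) 1 v w - B_poly (Suc n) v w = A_poly n 1 v w - 1" by (rule R3[OF n1])
      have r3: "A_poly n 1 v w = B_poly n v w + (if k \<ge> 1 then A_poly k 1 v w else 0) - (if k \<ge> 1 then 1 else 0)"
      proof (cases "k \<ge> 1")
        case True then show ?thesis using R3[OF True, of v w] Suc by simp
      next
        case False then have "k = 0" by simp
        then show ?thesis using Suc by (simp add: A1 B1)
      qed
      have G: "?RHS $ N = 1 - 1 - (if k \<ge> 1 then 1 else 0) * w + w * (if k \<ge> 1 then A_poly k 1 v w else 0)
          + v * w / (1 - v) * A_poly n 1 v w - v ^ 2 * w / (1 - v) * A_poly n 1 1 (v * w)"
        unfolding R RN using \<open>N = Suc n\<close> Suc by (cases k) (simp_all add: A0)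
      show ?thesis unfolding G LN unfolding \<open>N = Suc n\<close>
        using alg2[OF r1 r3n e r3] by simp
    qed
  qed
qed

theorem lemma3:
  shows "(\<forall>u v w :: real. u * v \<noteq> 1 \<longrightarrow>
      f_gf u v w =
        (fps_X - 2 * fps_X ^ 2 - fps_const w * fps_X ^ 3) * inverse (1 - fps_X)
        + fps_X * g_gf (u * v) w
        + fps_X * f_gf 1 v w
        + (fps_const w * fps_X ^ 2 + fps_const (u * v * w / (1 - u * v)) * fps_X) * f_gf 1 (u * v) w
        - fps_const (u ^ 2 * v ^ 2 * w / (1 - u * v)) * fps_X * f_gf 1 1 (u * v * w))
    \<and> (\<forall>v w :: real. v \<noteq> 1 \<longrightarrow>
      (1 - fps_X) * g_gf v w =
        (fps_X - fps_X ^ 2 - fps_const w * fps_X ^ 3) * inverse (1 - fps_X)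
        + (fps_const w * fps_X ^ 2 + fps_const (v * w / (1 - v)) * fps_X) * f_gf 1 v w
        - fps_const (v ^ 2 * w / (1 - v)) * fps_X * f_gf 1 1 (v * w))"
  using eq1 eq2 by blast


end
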